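(* Let $\rho:\mathbb Z^s\to GL(k,\mathbb Z)$ be a special homomorphism and let $f_1,f_2:G_{s,k}(\rho)\to\mathbb Z^s$ be epimorphisms. Then there is an isomorphism $\psi:\mathbb Z^s\to\mathbb Z^s$ such that $f_2=\psi\circ f_1$.
   Context: $G_{s,k}(\rho)$ is the semidirect product $\mathbb Z^s\ltimes\mathbb Z^k$ with multiplication $(g,v)(h,w)=(g+h,v+\rho(g)w)$. $\rho$ is special if there is $g\in\mathbb Z^s$ such that $1$ is not an eigenvalue of $\rho(g)$. *)

theory Defs
  imports "HOL-Analysis.Analysis" "HOL-Algebra.Algebra"
begin

text \<open>The additive group Z^s, realised as int^'s (dimension s = CARD('s)).\<close>
definition Zgrp :: "('n::finite) itself \<Rightarrow> (int^'n) monoid" where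
  "Zgrp _ = \<lparr>carrier = UNIV, mult = (+), one = 0\<rparr>"

definition GL_rep :: "(int^'s \<Rightarrow> int^'k^'k) \<Rightarrow> bool" where
  "GL_rep \<rho> \<longleftrightarrow> (\<forall>g. invertible (\<rho> g)) \<and> \<rho> 0 = mat 1
      \<and> (\<forall>g h. \<rho> (g + h) = \<rho> g ** \<rho> h)"

definition is_eigenvalue :: "'a::field^'k^'k \<Rightarrow> 'a \<Rightarrow> bool" where
  "is_eigenvalue A c \<longleftrightarrow> (\<exists>v. v \<noteq> 0 \<and> A *v v = c *s v)"

definition cmat :: "int^'k^'m \<Rightarrow> complex^'k^'m" where
  "cmat A = (\<chi> i j. of_int (A $ i $ j))"

definition special :: "(int^'s \<Rightarrow> int^'k^'k) \<Rightarrow> bool" where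
  "special \<rho> \<longleftrightarrow> (\<exists>g. \<not> is_eigenvalue (cmat (\<rho> g)) 1)"

definition Gsk :: "(int^'s \<Rightarrow> int^'k^'k) \<Rightarrow> ((int^'s) \<times> (int^'k)) monoid" where
  "Gsk \<rho> = \<lparr>carrier = UNIV,
              mult = (\<lambda>x y. (fst x + fst y, snd x + (\<rho> (fst x) *v snd y))),
              one = (0, 0)\<rparr>"

end

theory Submission
  imports Defs
begin

definition qmat :: "int^'m^'n \<Rightarrow> rat^'m^'n" where "qmat A = (\<chi> i j. of_int (A $ i $ j))"
definition qvec :: "int^'n \<Rightarrow> rat^'n" where "qvec v = (\<chi> i. of_int (v $ i))"

lemma qvec_mult: "qvec (A *v v) = qmat A *v qvec v"
  by (simp add: qvec_def qmat_def matrix_vector_mult_def vec_eq_iff of_int_sum)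

lemma qvec_inj: "qvec a = qvec b \<Longrightarrow> a = b"
  by (simp add: qvec_def vec_eq_iff)

lemma qvec_smult: "qvec (c *s v) = of_int c *s qvec v"
  by (simp add: qvec_def vec_eq_iff)

lemma field_inj_surj:
  fixes A :: "'a::field^'n^'n"
  shows "inj ((*v) A) \<longleftrightarrow> surj ((*v) A)"
  using matrix_left_invertible_injective[of A] matrix_right_invertible_surjective[of A]
    matrix_left_right_inverse[of A] by metis

lemma clear_denoms:
  fixes x :: "rat^'n"
  shows "\<exists>D y. D > 0 \<and> qvec y = of_int D *s x"
proof -
  define q where "q j = quotient_of (x $ j)" for j
  define D where "D = (\<Prod>j\<in>UNIV. snd (q j))"
  have pos: "snd (q j) > 0" for j unfolding q_def using quotient_of_denom_pos' by blast
  have Dpos: "D > 0" unfolding D_def using pos by (simp add: prod_pos)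
  have dv: "snd (q j) dvd D" for j unfolding D_def by (rule dvd_prodI) auto
  define y where "y = (\<chi> j. fst (q j) * (D div snd (q j)))"
  have "qvec y = of_int D *s x"
  proof (simp add: vec_eq_iff qvec_def y_def, intro allI)
    fix j
    have xj: "x $ j = of_int (fst (q j)) / of_int (snd (q j))"
      unfolding q_def by (simp add: quotient_of_div surjective_pairing)
    obtain c where c: "D = snd (q j) * c" using dv by blast
    have "D div snd (q j) = c" using c pos[of j] by simp
    then show "of_int (fst (q j)) * of_int (D div snd (q j)) = of_int D * (x $ j :: rat)"
      using pos[of j] by (simp add: xj c field_simps)
  qed
  then show ?thesis using Dpos by blast
qed

lemma add_smult:
  fixes h :: "int^'a \<Rightarrow> int^'b"
  assumes "Modules.additive h"
  shows "h (n *s x) = n *s h x"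
proof -
  have nat: "h (of_nat m *s x) = of_nat m *s h x" for m
  proof (induction m)
    case 0 then show ?case using additive.zero[OF assms] by simp
  next
    case (Suc m)
    have "h (of_nat (Suc m) *s x) = h (x + of_nat m *s x)" by (simp add: vector_sadd_rdistrib)
    also have "... = h x + of_nat m *s h x" using additive.add[OF assms] Suc by simp
    finally show ?case by (simp add: vector_sadd_rdistrib)
  qed
  show ?thesis
  proof (cases "n \<ge> 0")
    case True then show ?thesis using nat[of "nat n"] by simp
  next
    case False
    define m where "m = nat (-n)"
    have e1: "n *s v = - (of_nat m *s v)" for v :: "int^'c" using False by (simp add: vec_eq_iff m_def)
    have "h (n *s x) = h (- (of_nat m *s x))" by (simp add: e1)
    also have "... = - (of_nat m *s h x)" using additive.minus[OF assms] nat by simp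
    also have "... = n *s h x" by (simp add: e1)
    finally show ?thesis .
  qed
qed

lemma add_matrix:
  fixes h :: "int^'a \<Rightarrow> int^'b"
  assumes "Modules.additive h"
  shows "h x = (\<chi> i j. h (axis j 1) $ i) *v x"
proof -
  have "h x = h (\<Sum>j\<in>UNIV. x$j *s axis j 1)" by (simp add: basis_expansion)
  also have "... = (\<Sum>j\<in>UNIV. x$j *s h (axis j 1))"
    unfolding additive.sum[OF assms] add_smult[OF assms] ..
  also have "... = (\<chi> i j. h (axis j 1) $ i) *v x"
    by (simp add: vec_eq_iff matrix_vector_mult_def sum_component mult.commute)
  finally show ?thesis .
qed

lemma hopf:
  fixes h :: "int^'a \<Rightarrow> int^'a"
  assumes "Modules.additive h" "surj h"
  shows "inj h"
proof -
  define M where "M = (\<chi> i j. h (axis j 1) $ i)"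
  have hM: "h x = M *v x" for x unfolding M_def by (rule add_matrix[OF assms(1)])
  have "surj ((*v) (qmat M))"
  proof (rule surjI[where f = "\<lambda>x. SOME z. qmat M *v z = x"], rule someI_ex)
    fix x :: "rat^'a"
    obtain D y where Dy: "D > 0" "qvec y = of_int D *s x" using clear_denoms by blast
    obtain z where "y = h z" using assms(2) by (metis surjD)
    then have "y = M *v z" using hM by simp
    then have "qmat M *v qvec z = of_int D *s x" using Dy qvec_mult by metis
    then have "qmat M *v ((1 / of_int D) *s qvec z) = x" using Dy(1)
      by (simp add: vec.scale)
    then show "\<exists>z. qmat M *v z = x" by blast
  qed
  then have "inj ((*v) (qmat M))" using field_inj_surj by blast
  then show ?thesis
    unfolding inj_def hM by (metis qvec_mult qvec_inj)
qed


lemma qmat_diff: "qmat (R - mat 1) = qmat R - mat 1"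
  by (simp add: vec_eq_iff qmat_def mat_def)

lemma special_solve:
  fixes R :: "int^'k^'k"
  assumes "\<not> is_eigenvalue (cmat R) 1"
  shows "\<exists>D y. D \<noteq> 0 \<and> (R - mat 1) *v y = D *s v"
proof -
  have ker: "\<forall>x. qmat (R - mat 1) *v x = 0 \<longrightarrow> x = 0"
  proof (intro allI impI, rule ccontr)
    fix x assume x0: "qmat (R - mat 1) *v x = 0" "x \<noteq> 0"
    then have Rx: "qmat R *v x = x"
      by (simp add: qmat_diff matrix_vector_mult_diff_rdistrib)
    define w where "w = (\<chi> i. (of_rat (x $ i) :: complex))"
    have "(cmat R *v w) $ i = of_rat ((qmat R *v x) $ i)" for i
      by (simp add: w_def cmat_def qmat_def matrix_vector_mult_def of_rat_sum of_rat_mult)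
    then have "cmat R *v w = w" using Rx by (simp add: vec_eq_iff w_def)
    moreover have "w \<noteq> 0" using x0(2) by (simp add: vec_eq_iff w_def)
    ultimately have "is_eigenvalue (cmat R) 1" unfolding is_eigenvalue_def by auto
    then show False using assms by blast
  qed
  then have "surj ((*v) (qmat (R - mat 1)))"
    using matrix_left_invertible_ker field_inj_surj matrix_left_invertible_injective by metis
  then obtain x where x: "qmat (R - mat 1) *v x = qvec v" by (metis surjD)
  obtain D y where Dy: "D > 0" "qvec y = of_int D *s x" using clear_denoms by blast
  have "qvec ((R - mat 1) *v y) = qvec (D *s v)"
    using x Dy by (simp add: qvec_mult qvec_smult vec.scale)
  then show ?thesis using Dy(1) qvec_inj by (metis less_irrefl)
qed


lemma factor:
  fixes \<rho> :: "int^'s \<Rightarrow> int^'k^'k" and f :: "(int^'s) \<times> (int^'k) \<Rightarrow> int^'s"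
  assumes rep: "GL_rep \<rho>" and sp: "special \<rho>"
    and hf: "f \<in> hom (Gsk \<rho>) (Zgrp TYPE('s))"
  shows "\<exists>\<phi>. Modules.additive \<phi> \<and> (\<forall>g v. f (g, v) = \<phi> g)"
proof -
  have fm: "f (fst x + fst y, snd x + \<rho> (fst x) *v snd y) = f x + f y" for x y
    using hom_mult[OF hf, of x y] by (simp add: Gsk_def Zgrp_def)
  have r0: "\<rho> 0 = mat 1" using rep by (simp add: GL_rep_def)
  have decomp: "f (g, v) = f (0, v) + f (g, 0)" for g v
    using fm[of "(0, v)" "(g, 0)"] by (simp add: r0)
  have hadd: "Modules.additive (\<lambda>v. f (0, v))"
    by unfold_locales (use fm[of "(0, _)" "(0, _)"] in \<open>simp add: r0\<close>)
  have conj: "f (0, \<rho> g *v v) = f (0, v)" for g v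
    using fm[of "(g, 0)" "(0, v)"] decomp[of g "\<rho> g *v v"] by (simp add: add.commute)
  obtain g0 where g0: "\<not> is_eigenvalue (cmat (\<rho> g0)) 1" using sp special_def by blast
  have kill: "f (0, (\<rho> g0 - mat 1) *v v) = 0" for v
    using additive.diff[OF hadd, of "\<rho> g0 *v v" v] conj[of g0 v]
    by (simp add: matrix_vector_mult_diff_rdistrib)
  have h0: "f (0, v) = 0" for v
  proof -
    obtain D y where Dy: "D \<noteq> 0" "(\<rho> g0 - mat 1) *v y = D *s v"
      using special_solve[OF g0] by blast
    have "D *s f (0, v) = 0"
      using kill[of y] Dy(2) add_smult[OF hadd, of D v] by simp
    then show ?thesis using Dy(1) by (simp add: vec_eq_iff)
  qed
  have padd: "Modules.additive (\<lambda>g. f (g, 0))"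
    by unfold_locales (use fm[of "(_, 0)" "(_, 0)"] in simp)
  have fg: "\<forall>g v. f (g, v) = f (g, 0)"
  proof (intro allI)
    fix g v
    have "f (g, v) = f (0, v) + f (g, 0)" by (rule decomp)
    then show "f (g, v) = f (g, 0)" by (simp only: h0 add_0)
  qed
  show ?thesis using padd fg by blast
qed

theorem lemma6p8:
  fixes \<rho> :: "int^'s \<Rightarrow> int^'k^'k"
    and f1 f2 :: "(int^'s) \<times> (int^'k) \<Rightarrow> int^'s"
  assumes "GL_rep \<rho>" and "special \<rho>"
    and "f1 \<in> hom (Gsk \<rho>) (Zgrp TYPE('s))" and "f1 ` carrier (Gsk \<rho>) = carrier (Zgrp TYPE('s))"
    and "f2 \<in> hom (Gsk \<rho>) (Zgrp TYPE('s))" and "f2 ` carrier (Gsk \<rho>) = carrier (Zgrp TYPE('s))"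
  shows "\<exists>\<psi>. \<psi> \<in> iso (Zgrp TYPE('s)) (Zgrp TYPE('s)) \<and> f2 = \<psi> \<circ> f1"
proof -
  obtain p1 where p1: "Modules.additive p1" "\<And>g v. f1 (g, v) = p1 g"
    using factor[OF assms(1,2,3)] by blast
  obtain p2 where p2: "Modules.additive p2" "\<And>g v. f2 (g, v) = p2 g"
    using factor[OF assms(1,2,5)] by blast
  have s1: "surj p1"
  proof -
    have U: "f1 ` UNIV = UNIV" using assms(4) by (simp add: Gsk_def Zgrp_def)
    have "y \<in> range p1" for y
    proof -
      have "y \<in> f1 ` UNIV" using U by simp
      then obtain x where "y = f1 x" by blast
      then have "y = p1 (fst x)" using p1(2)[of "fst x" "snd x"] by simp
      then show ?thesis by blast
    qed
    then show ?thesis by blast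
  qed
  have s2: "surj p2"
  proof -
    have U: "f2 ` UNIV = UNIV" using assms(6) by (simp add: Gsk_def Zgrp_def)
    have "y \<in> range p2" for y
    proof -
      have "y \<in> f2 ` UNIV" using U by simp
      then obtain x where "y = f2 x" by blast
      then have "y = p2 (fst x)" using p2(2)[of "fst x" "snd x"] by simp
      then show ?thesis by blast
    qed
    then show ?thesis by blast
  qed
  have i1: "inj p1" using hopf[OF p1(1) s1] .
  have b1: "bij p1" using i1 s1 by (simp add: bij_def)
  define q where "q = inv_into UNIV p1"
  have pq: "p1 (q a) = a" for a unfolding q_def using s1 by (simp add: surj_f_inv_f)
  have qp: "q (p1 a) = a" for a unfolding q_def using i1 by simp
  have qadd: "q (a + b) = q a + q b" for a b
  proof -
    have "p1 (q a + q b) = a + b" using additive.add[OF p1(1)] pq by simp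
    then have "q (a + b) = q (p1 (q a + q b))" by simp
    also have "... = q a + q b" by (rule qp)
    finally show ?thesis .
  qed
  define psi where "psi = p2 \<circ> q"
  have padd: "Modules.additive psi"
    by unfold_locales (simp add: psi_def qadd additive.add[OF p2(1)])
  have spsi: "surj psi"
  proof -
    have "y \<in> range psi" for y
    proof -
      obtain x where "y = p2 x" using s2 by (metis surjD)
      then have "y = psi (p1 x)" by (simp add: psi_def qp)
      then show ?thesis by blast
    qed
    then show ?thesis by blast
  qed
  have ipsi: "inj psi" using hopf[OF padd spsi] .
  have "psi \<in> iso (Zgrp TYPE('s)) (Zgrp TYPE('s))"
  proof -
    have "psi \<in> hom (Zgrp TYPE('s)) (Zgrp TYPE('s))"
      by (rule homI) (simp_all add: Zgrp_def additive.add[OF padd])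
    moreover have "bij_betw psi (carrier (Zgrp TYPE('s))) (carrier (Zgrp TYPE('s)))"
      using ipsi spsi by (simp add: Zgrp_def bij_betw_def)
    ultimately show ?thesis unfolding iso_def by blast
  qed
  moreover have "f2 = psi \<circ> f1"
  proof
    fix x :: "(int^'s) \<times> (int^'k)"
    obtain g v where "x = (g, v)" by fastforce
    then show "f2 x = (psi \<circ> f1) x" by (simp add: p1(2) p2(2) psi_def qp)
  qed
  ultimately show ?thesis by blast
qed

end
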